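(* Every spider graph is odd prime.
   Context: All graphs are finite and simple. A graph $G$ of order $N$ is odd prime if there is a bijection $\ell:V(G)\to\{1,3,\ldots,2N-1\}$ with $\gcd(\ell(u),\ell(v))=1$ for every edge $uv$. A spider is a tree obtained from disjoint paths $P_{n_1},\ldots,P_{n_k}$ and a new central vertex $v$ by joining one end vertex of each path to $v$ (equivalently, a tree with at most one vertex of degree at least $3$). *)

theory Defs
  imports Main "HOL-Computational_Algebra.Primes"
begin

text \<open>A finite simple graph is given by a finite vertex set V and an edge relation E
(assumed symmetric and irreflexive on V).\<close>

definition odd_prime :: "'a set \<Rightarrow> ('a \<Rightarrow> 'a \<Rightarrow> bool) \<Rightarrow> bool" where
  "odd_prime V E \<longleftrightarrow>
     (\<exists>l :: 'a \<Rightarrow> nat. bij_betw l V {m. odd m \<and> m < 2 * card V} \<and>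
        (\<forall>u\<in>V. \<forall>v\<in>V. E u v \<longrightarrow> coprime (l u) (l v)))"

text \<open>The spider S(n_1,...,n_k): a central vertex (None) joined to one end of each
of the disjoint paths P_{n_1},...,P_{n_k}.  Vertex Some (i, j), for i < k and
1 \<le> j \<le> n_i, is the j-th vertex of the i-th path, vertex Some (i, 1) being the
end joined to the centre.\<close>

definition spider_V :: "nat list \<Rightarrow> (nat \<times> nat) option set" where
  "spider_V ns = insert None {Some (i, j) | i j. i < length ns \<and> 1 \<le> j \<and> j \<le> ns ! i}"

definition spider_arc :: "nat list \<Rightarrow> (nat \<times> nat) option \<Rightarrow> (nat \<times> nat) option \<Rightarrow> bool" where
  "spider_arc ns u v \<longleftrightarrow>
     (\<exists>i. i < length ns \<and> 1 \<le> ns ! i \<and> u = None \<and> v = Some (i, 1)) \<or>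
     (\<exists>i j. i < length ns \<and> 1 \<le> j \<and> j + 1 \<le> ns ! i \<and> u = Some (i, j) \<and> v = Some (i, j + 1))"

definition spider_E :: "nat list \<Rightarrow> (nat \<times> nat) option \<Rightarrow> (nat \<times> nat) option \<Rightarrow> bool" where
  "spider_E ns u v \<longleftrightarrow> spider_arc ns u v \<or> spider_arc ns v u"

end

theory Submission
  imports Defs
begin

definition pos :: "nat list \<Rightarrow> (nat \<times> nat) option \<Rightarrow> nat" where
  "pos ns v = (case v of None \<Rightarrow> 0 | Some (i, j) \<Rightarrow> sum_list (take i ns) + j)"

lemma V_nil: "spider_V [] = {None}"
  unfolding spider_V_def by auto

lemma V_snoc: "spider_V (ns @ [n]) = spider_V ns \<union> (\<lambda>j. Some (length ns, j)) ` {1..n}"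
  unfolding spider_V_def by (auto simp: nth_append less_Suc_eq)

lemma pos_snoc: "v \<in> spider_V ns \<Longrightarrow> pos (ns @ [n]) v = pos ns v"
  unfolding spider_V_def pos_def by auto

lemma pos_snoc_new: "pos (ns @ [n]) (Some (length ns, j)) = sum_list ns + j"
  unfolding pos_def by simp

lemma pos_bij: "bij_betw (pos ns) (spider_V ns) {..sum_list ns}"
proof (induction ns rule: rev_induct)
  case Nil
  then show ?case by (simp add: V_nil pos_def bij_betw_def)
next
  case (snoc n ns)
  have A: "bij_betw (pos (ns @ [n])) (spider_V ns) {..sum_list ns}"
    using snoc bij_betw_cong[of "spider_V ns" "pos (ns @ [n])" "pos ns"] pos_snoc by blast
  have B: "bij_betw (pos (ns @ [n])) ((\<lambda>j. Some (length ns, j)) ` {1..n}) {sum_list ns + 1..sum_list ns + n}"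
    unfolding bij_betw_def
  proof
    show "inj_on (pos (ns @ [n])) ((\<lambda>j. Some (length ns, j)) ` {1..n})"
      by (auto simp: inj_on_def pos_snoc_new)
    show "pos (ns @ [n]) ` (\<lambda>j. Some (length ns, j)) ` {1..n} = {sum_list ns + 1..sum_list ns + n}"
    proof -
      have "pos (ns @ [n]) ` (\<lambda>j. Some (length ns, j)) ` {1..n} = (\<lambda>j. sum_list ns + j) ` {1..n}"
        by (simp add: image_image pos_snoc_new)
      also have "\<dots> = {sum_list ns + 1..sum_list ns + n}"
        by (simp add: image_add_atLeastAtMost)
      finally show ?thesis .
    qed
  qed
  have C: "bij_betw (pos (ns @ [n])) (spider_V ns \<union> (\<lambda>j. Some (length ns, j)) ` {1..n})
     ({..sum_list ns} \<union> {sum_list ns + 1..sum_list ns + n})"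
    by (rule bij_betw_combine[OF A B]) auto
  have D: "{..sum_list ns} \<union> {sum_list ns + 1..sum_list ns + n} = {..sum_list (ns @ [n])}"
    by auto
  show ?case using C D V_snoc by simp
qed

lemma odd_bij: "bij_betw (\<lambda>k. 2 * k + 1) {..(S::nat)} {m. odd m \<and> m < 2 * (S + 1)}"
  unfolding bij_betw_def
proof
  show "inj_on (\<lambda>k. 2 * k + 1) {..S}" by (auto simp: inj_on_def)
  show "(\<lambda>k. 2 * k + 1) ` {..S} = {m. odd m \<and> m < 2 * (S + 1)}"
  proof (rule set_eqI, rule iffI)
    fix m assume "m \<in> (\<lambda>k. 2 * k + 1) ` {..S}" then show "m \<in> {m. odd m \<and> m < 2 * (S + 1)}" by auto
  next
    fix m assume m: "m \<in> {m. odd m \<and> m < 2 * (S + 1)}"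
    then have "m = 2 * (m div 2) + 1" "m div 2 \<le> S" by auto
    then show "m \<in> (\<lambda>k. 2 * k + 1) ` {..S}" by blast
  qed
qed

lemma coprime_odd2: "coprime (2 * p + 1) (2 * p + 3 :: nat)"
proof -
  have "gcd (2 * p + 1) (2 * p + 3) = gcd (2 * p + 1) (2::nat)"
  proof -
    have "2 * p + 3 = (2 * p + 1) + 2" by simp
    then show ?thesis by (metis gcd_add2)
  qed
  also have "\<dots> = 1"
  proof -
    have "odd (2 * p + 1)" by simp
    then show ?thesis by (simp add: coprime_iff_gcd_eq_1[symmetric])
  qed
  finally show ?thesis by (simp add: coprime_iff_gcd_eq_1)
qed

theorem theorem4p2:
  fixes ns :: "nat list"
  assumes "\<forall>n\<in>set ns. 1 \<le> n"
  shows "odd_prime (spider_V ns) (spider_E ns)"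
proof -
  let ?S = "sum_list ns"
  have pb: "bij_betw (pos ns) (spider_V ns) {..?S}" by (rule pos_bij)
  have card: "card (spider_V ns) = ?S + 1"
    using bij_betw_same_card[OF pb] by simp
  have lb: "bij_betw (\<lambda>v. 2 * pos ns v + 1) (spider_V ns) {m. odd m \<and> m < 2 * card (spider_V ns)}"
    using bij_betw_trans[OF pb odd_bij[of ?S]] card by (simp add: comp_def)
  have arc: "coprime (2 * pos ns u + 1) (2 * pos ns v + 1)" if "spider_arc ns u v" for u v
    using that
  proof (unfold spider_arc_def, elim disjE exE conjE)
    fix i assume "u = None" then show ?thesis by (simp add: pos_def)
  next
    fix i j assume "u = Some (i, j)" "v = Some (i, j + 1)"
    then have "2 * pos ns v + 1 = 2 * pos ns u + 3" by (simp add: pos_def)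
    then show ?thesis using coprime_odd2[of "pos ns u"] by (simp only:)
  qed
  show ?thesis
    unfolding odd_prime_def
  proof (intro exI conjI ballI impI)
    show "bij_betw (\<lambda>v. 2 * pos ns v + 1) (spider_V ns) {m. odd m \<and> m < 2 * card (spider_V ns)}" by (rule lb)
  next
    fix u v assume "spider_E ns u v"
    then show "coprime (2 * pos ns u + 1) (2 * pos ns v + 1)"
      unfolding spider_E_def using arc coprime_commute by blast
  qed
qed

end
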